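(* Let $f=\prod_{i=1}^n(y-a_i)\in\overline K[y]$ be reduced ($a_i$ pairwise distinct, $n\ge2$) with $\nu(a_i)>0$ for all $i$. The complete magic matrix $\mathcal A$ induces an automorphism $\mathcal A_{|\overline{\mathcal F}}$ of $\overline{\mathcal F}$. Moreover, the inverse $(\mathcal A_{|\overline{\mathcal F}})^{-1}$ has graded degree $+1$ and its graded map is $(A_{|F})^{-1}$: for every $r\in\mathbf Q$ and $w\in\overline{\mathcal F}_r$, $(\mathcal A_{|\overline{\mathcal F}})^{-1}w\in\overline{\mathcal F}_{r+1}$ and $\mathrm{in}_{r+1}\bigl((\mathcal A_{|\overline{\mathcal F}})^{-1}w\bigr)=(A_{|F})^{-1}\,\mathrm{in}_r(w)$.
   Context: $\overline K=\bigcup_{d\ge1}\mathbf C[[x^{1/d}]][1/x]$ with valuation $\nu$, $'$ denotes $d/dx$. $\overline{\mathcal E}$ is the $\overline K$-space of polynomials in $y$ of degree $<n$, with basis $\varepsilon_i=\prod_{j\ne i}(y-a_j)$; $\overline{\mathcal F}=\{\sum u_i\varepsilon_i:\sum u_i=0\}$ (the polynomials of degree $<n-1$). $\mathrm{val}(\sum w_i\varepsilon_i)=\inf_i\nu(w_i)$; $\overline{\mathcal F}_r=\{w\in\overline{\mathcal F}:\mathrm{val}(w)\ge r\}$; $\mathrm{in}_r(w)\in\mathbf C^n$ is the vector of coefficients of $x^r$ in the $w_i$. $\mathcal A$ is the symmetric matrix over $\overline K$ with off-diagonal entries $-(a'_i-a'_j)/(a_i-a_j)$ and diagonal entries $\sum_{j\ne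 i}(a'_i-a'_j)/(a_i-a_j)$, acting on coordinates in the basis $(\varepsilon_i)$. $A$ is the rational matrix with entries $-m_{i,j}$ off the diagonal and $m_i=\sum_{j\ne i}m_{i,j}$ on the diagonal, where $m_{i,j}=\nu(a_i-a_j)$; $F=\{W\in\mathbf C^n:\sum W_i=0\}$ and $A_{|F}$ is the restriction of $A$ to $F$ (which is invertible). *)

theory Defs
  imports "HOL-Computational_Algebra.Formal_Laurent_Series"
begin

text \<open>A finite family of Puiseux series always lies in a common field
 C((t)) with t = x^(1/d). Elements of that field are represented as
 complex fls in the variable t. Exponent k of t is exponent k/d of x.\<close>

definition xderiv :: "nat \<Rightarrow> complex fls \<Rightarrow> complex fls" where
  "xderiv d g = fls_deriv g * fls_const (1 / of_nat d) * fls_X_intpow (1 - int d)"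

definition pval :: "nat \<Rightarrow> complex fls \<Rightarrow> rat" where
  "pval d g = of_int (fls_subdegree g) / of_nat d"

definition qmag :: "nat \<Rightarrow> ('n \<Rightarrow> complex fls) \<Rightarrow> 'n \<Rightarrow> 'n \<Rightarrow> complex fls" where
  "qmag d a i j = (xderiv d (a i) - xderiv d (a j)) / (a i - a j)"

definition magic :: "nat \<Rightarrow> ('n::finite \<Rightarrow> complex fls) \<Rightarrow> 'n \<Rightarrow> 'n \<Rightarrow> complex fls" where
  "magic d a i j = (if i = j then (\<Sum>k\<in>UNIV - {i}. qmag d a i k) else - qmag d a i j)"

definition valmat :: "nat \<Rightarrow> ('n::finite \<Rightarrow> complex fls) \<Rightarrow> 'n \<Rightarrow> 'n \<Rightarrow> rat" where
  "valmat d a i j = (if i = j then (\<Sum>k\<in>UNIV - {i}. pval d (a i - a k)) else - pval d (a i - a j))"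

definition mvec :: "('n::finite \<Rightarrow> 'n \<Rightarrow> 'a::comm_semiring_0) \<Rightarrow> ('n \<Rightarrow> 'a) \<Rightarrow> 'n \<Rightarrow> 'a" where
  "mvec M v = (\<lambda>i. \<Sum>j\<in>UNIV. M i j * v j)"

definition Fbar :: "('n::finite \<Rightarrow> complex fls) set" where
  "Fbar = {w. (\<Sum>i\<in>UNIV. w i) = 0}"

definition Fc :: "('n::finite \<Rightarrow> complex) set" where
  "Fc = {W. (\<Sum>i\<in>UNIV. W i) = 0}"

definition val_ge :: "nat \<Rightarrow> rat \<Rightarrow> ('n \<Rightarrow> complex fls) \<Rightarrow> bool" where
  "val_ge d r w \<longleftrightarrow> (\<forall>i k. of_int k / of_nat d < r \<longrightarrow> fls_nth (w i) k = 0)"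

definition initial :: "nat \<Rightarrow> rat \<Rightarrow> ('n \<Rightarrow> complex fls) \<Rightarrow> 'n \<Rightarrow> complex" where
  "initial d r w i = (if r * of_nat d \<in> \<int> then fls_nth (w i) \<lfloor>r * of_nat d\<rfloor> else 0)"

end

theory Submission imports Defs "HOL-Analysis.Cartesian_Space" begin

lemma prod_low:
  fixes f g :: "complex fls"
  assumes f: "\<forall>k<p. fls_nth f k = 0" and g: "\<forall>k<s. fls_nth g k = 0"
  shows "(\<forall>k<p+s. fls_nth (f*g) k = 0) \<and> fls_nth (f*g) (p+s) = fls_nth f p * fls_nth g s"
proof (cases "f = 0 \<or> g = 0")
  case True then show ?thesis by auto
next
  case False
  then have nz: "f \<noteq> 0" "g \<noteq> 0" by auto
  have df: "p \<le> fls_subdegree f" using fls_subdegree_geI[OF nz(1)] f by auto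
  have dg: "s \<le> fls_subdegree g" using fls_subdegree_geI[OF nz(2)] g by auto
  have A: "\<forall>k<p+s. fls_nth (f*g) k = 0" using df dg by (auto intro: fls_times_nth_eq0)
  have B: "fls_nth (f*g) (p+s) = fls_nth f p * fls_nth g s"
  proof (cases "p = fls_subdegree f \<and> s = fls_subdegree g")
    case True
    then show ?thesis using fls_times_nth(4)[of f g "p+s"] by simp
  next
    case False
    then have "p < fls_subdegree f \<or> s < fls_subdegree g" using df dg by auto
    then show ?thesis using df dg by (auto intro!: fls_times_nth_eq0)
  qed
  show ?thesis using A B by auto
qed

lemma cancel_low:
  fixes f g :: "complex fls"
  assumes fg: "\<forall>k<p+s. fls_nth (f*g) k = 0" and g: "\<forall>k<s. fls_nth g k = 0" and gs: "fls_nth g s \<noteq> 0"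
  shows "\<forall>k<p. fls_nth f k = 0"
proof (cases "f = 0")
  case True then show ?thesis by auto
next
  case False
  have gnz: "g \<noteq> 0" using gs by auto
  have dg: "fls_subdegree g = s"
    using fls_subdegree_geI[OF gnz, of s] g fls_subdegree_leI[OF gs] by auto
  have "f * g \<noteq> 0" using False gnz by simp
  then have "p + s \<le> fls_subdegree (f*g)" using fls_subdegree_geI fg by blast
  then have "p \<le> fls_subdegree f" using False gnz dg by simp
  then show ?thesis by auto
qed


lemma xderiv_low:
  assumes "D \<noteq> 0" "d \<ge> 1"
  shows "\<forall>k < fls_subdegree D - int d. fls_nth (xderiv d D) k = 0"
    and "fls_nth (xderiv d D) (fls_subdegree D - int d) = of_int (fls_subdegree D) / of_nat d * fls_nth D (fls_subdegree D)"
proof -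
  have nth: "fls_nth (xderiv d D) k = of_int (k + int d) * fls_nth D (k + int d) * (1 / of_nat d)" for k
    unfolding xderiv_def fls_X_intpow_times_conv_shift(2) fls_shift_nth fls_mult_const_nth fls_deriv_nth
    by (simp add: algebra_simps)
  show "\<forall>k < fls_subdegree D - int d. fls_nth (xderiv d D) k = 0"
    unfolding nth by auto
  show "fls_nth (xderiv d D) (fls_subdegree D - int d) = of_int (fls_subdegree D) / of_nat d * fls_nth D (fls_subdegree D)"
    unfolding nth by simp
qed

lemma xderiv_diff: "xderiv d (f - g) = xderiv d f - xderiv d g"
  unfolding xderiv_def by (simp add: algebra_simps)

lemma qmag_low:
  assumes "a i \<noteq> a j" "d \<ge> 1"
  shows "\<forall>k < - int d. fls_nth (qmag d a i j) k = 0"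
    and "fls_nth (qmag d a i j) (- int d) = of_rat (pval d (a i - a j))"
proof -
  define D where "D = a i - a j"
  define e where "e = fls_subdegree D"
  have Dnz: "D \<noteq> 0" using assms by (simp add: D_def)
  have q: "qmag d a i j = xderiv d D / D" unfolding qmag_def D_def xderiv_diff ..
  have QD: "qmag d a i j * D = xderiv d D" using Dnz q by simp
  have Dlow: "\<forall>k<e. fls_nth D k = 0" by (simp add: e_def)
  have De: "fls_nth D e \<noteq> 0" using Dnz by (simp add: e_def)
  have X1: "\<forall>k < - int d + e. fls_nth (qmag d a i j * D) k = 0"
    using xderiv_low(1)[OF Dnz assms(2)] QD by (simp add: e_def)
  show low: "\<forall>k < - int d. fls_nth (qmag d a i j) k = 0"
    using cancel_low[OF X1 Dlow De] .
  have "fls_nth (qmag d a i j * D) (- int d + e) = fls_nth (qmag d a i j) (- int d) * fls_nth D e"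
    using prod_low[OF low Dlow] by simp
  also have "fls_nth (qmag d a i j * D) (- int d + e) = of_int e / of_nat d * fls_nth D e"
    using xderiv_low(2)[OF Dnz assms(2)] QD by (simp add: e_def)
  finally have "fls_nth (qmag d a i j) (- int d) = of_int e / of_nat d"
    using De by (metis mult_right_cancel)
  then show "fls_nth (qmag d a i j) (- int d) = of_rat (pval d (a i - a j))"
    unfolding pval_def D_def[symmetric] e_def[symmetric] by (simp add: of_rat_divide)
qed


lemma magic_low:
  fixes a :: "'n::finite \<Rightarrow> complex fls"
  assumes "inj a" "d \<ge> 1"
  shows "(\<forall>k < - int d. fls_nth (magic d a i j) k = 0) \<and>
         fls_nth (magic d a i j) (- int d) = of_rat (valmat d a i j)"
proof (cases "i = j")
  case True
  have ne: "\<And>k. k \<in> UNIV - {i} \<Longrightarrow> a i \<noteq> a k" using assms(1) by (auto dest: injD)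
  have Q1: "fls_nth (qmag d a i k) l = 0" if "k \<in> UNIV - {i}" "l < - int d" for k l
    using qmag_low(1)[of a i k d, OF ne[OF that(1)] assms(2)] that(2) by blast
  have Q2: "fls_nth (qmag d a i k) (- int d) = of_rat (pval d (a i - a k))" if "k \<in> UNIV - {i}" for k
    using qmag_low(2)[of a i k d, OF ne[OF that(1)] assms(2)] .
  have M: "magic d a i j = (\<Sum>k\<in>UNIV - {i}. qmag d a i k)" using True by (simp add: magic_def)
  have V: "valmat d a i j = (\<Sum>k\<in>UNIV - {i}. pval d (a i - a k))" using True by (simp add: valmat_def)
  show ?thesis
    unfolding M V fls_nth_sum of_rat_sum
    using Q1 Q2 by (auto intro: sum.neutral sum.cong)
next
  case False
  have ne: "a i \<noteq> a j" using assms(1) False by (auto dest: injD)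
  have M: "magic d a i j = - qmag d a i j" using False by (simp add: magic_def)
  have V: "valmat d a i j = - pval d (a i - a j)" using False by (simp add: valmat_def)
  show ?thesis unfolding M V fls_uminus_nth of_rat_minus
    using qmag_low[of a i j d, OF ne assms(2)] by simp
qed

lemma key:
  fixes a :: "'n::finite \<Rightarrow> complex fls"
  assumes "inj a" "d \<ge> 1" and v: "\<forall>j l. l < s \<longrightarrow> fls_nth (v j) l = 0"
  shows "(\<forall>k < s - int d. fls_nth (mvec (magic d a) v i) k = 0) \<and>
    fls_nth (mvec (magic d a) v i) (s - int d) =
      mvec (\<lambda>i j. of_rat (valmat d a i j)) (\<lambda>j. fls_nth (v j) s) i"
proof -
  have P: "(\<forall>k< - int d + s. fls_nth (magic d a i j * v j) k = 0) \<and>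
     fls_nth (magic d a i j * v j) (- int d + s) = fls_nth (magic d a i j) (- int d) * fls_nth (v j) s" for j
    apply (rule prod_low)
    using magic_low[OF assms(1,2), of i j] v by auto
  have e: "s - int d = - int d + s" by simp
  have A: "\<forall>k < s - int d. fls_nth (mvec (magic d a) v i) k = 0"
    unfolding mvec_def fls_nth_sum e using P by (auto intro: sum.neutral)
  have B: "fls_nth (mvec (magic d a) v i) (s - int d) =
      mvec (\<lambda>i j. of_rat (valmat d a i j)) (\<lambda>j. fls_nth (v j) s) i"
    unfolding mvec_def fls_nth_sum e
    apply (rule sum.cong, rule refl)
    using P magic_low[OF assms(1,2), of i] by metis
  show ?thesis using A B by blast
qed

lemma laplace_real:
  fixes c :: "'n::finite \<Rightarrow> 'n \<Rightarrow> real" and X :: "'n \<Rightarrow> real"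
  assumes pos: "\<And>i j. i \<noteq> j \<Longrightarrow> c i j > 0"
    and eq: "\<And>i. (\<Sum>j\<in>UNIV - {i}. c i j * (X i - X j)) = 0"
  shows "\<exists>i0. \<forall>j. X j = X i0"
proof -
  have "Max (range X) \<in> range X" by (rule Max_in) auto
  then obtain i0 where i0: "X i0 = Max (range X)" by (metis imageE)
  have le: "X j \<le> X i0" for j using i0 by simp
  have "\<forall>j\<in>UNIV - {i0}. c i0 j * (X i0 - X j) = 0"
    using sum_nonneg_eq_0_iff[of "UNIV - {i0}" "\<lambda>j. c i0 j * (X i0 - X j)"] eq[of i0] le pos
    by (simp add: less_imp_le)
  then have "X j = X i0" for j
  proof (cases "j = i0")
    case False
    assume A: "\<forall>j\<in>UNIV - {i0}. c i0 j * (X i0 - X j) = 0"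
    have "c i0 j * (X i0 - X j) = 0" using A False by blast
    moreover have "c i0 j > 0" using pos False by metis
    ultimately show ?thesis by simp
  qed simp
  then show ?thesis by blast
qed

lemma cofr: "(of_rat q :: complex) = complex_of_real (of_rat q)"
  by (cases q) (simp add: of_rat_rat)

lemma Re_of_rat_mult: "Re (of_rat q * z) = of_rat q * Re z"
  unfolding cofr by simp

lemma Im_of_rat_mult: "Im (of_rat q * z) = of_rat q * Im z"
  unfolding cofr by simp

lemma pval_pos:
  fixes a :: "'n \<Rightarrow> complex fls"
  assumes "a i \<noteq> a j" "d \<ge> 1" "\<forall>i. \<forall>k \<le> 0. fls_nth (a i) k = 0"
  shows "pval d (a i - a j) > 0"
proof -
  have "1 \<le> fls_subdegree (a i - a j)"
    apply (rule fls_subdegree_geI) using assms by auto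
  then show ?thesis using assms(2) unfolding pval_def by simp
qed

lemma laplace_inj:
  fixes a :: "'n::finite \<Rightarrow> complex fls"
  assumes "inj a" "d \<ge> 1" "\<forall>i. \<forall>k \<le> 0. fls_nth (a i) k = 0"
    and W: "W \<in> Fc" and AW: "mvec (\<lambda>i j. of_rat (valmat d a i j)) W = (\<lambda>_. 0)"
  shows "W = (\<lambda>_. 0)"
proof -
  define m where "m i j = pval d (a i - a j)" for i j
  have mpos: "i \<noteq> j \<Longrightarrow> (of_rat (m i j) :: real) > 0" for i j
    using pval_pos[of a i j d] assms(1-3) by (auto simp: m_def dest: injD)
  have expand: "mvec (\<lambda>i j. of_rat (valmat d a i j)) W i =
      (\<Sum>j\<in>UNIV - {i}. of_rat (m i j) * (W i - W j))" for i
  proof -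
    have "mvec (\<lambda>i j. of_rat (valmat d a i j)) W i =
      of_rat (valmat d a i i) * W i + (\<Sum>j\<in>UNIV - {i}. of_rat (valmat d a i j) * W j)"
      unfolding mvec_def by (simp add: sum.remove)
    also have "\<dots> = (\<Sum>j\<in>UNIV - {i}. of_rat (m i j) * W i) + (\<Sum>j\<in>UNIV - {i}. - of_rat (m i j) * W j)"
      by (simp add: valmat_def m_def of_rat_sum sum_distrib_right of_rat_minus)
    also have "\<dots> = (\<Sum>j\<in>UNIV - {i}. of_rat (m i j) * (W i - W j))"
      unfolding sum.distrib[symmetric] by (rule sum.cong) (simp_all add: right_diff_distrib)
    finally show ?thesis .
  qed
  have z: "(\<Sum>j\<in>UNIV - {i}. of_rat (m i j) * (W i - W j)) = (0::complex)" for i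
    using fun_cong[OF AW, of i] expand[of i] by simp
  have zr: "(\<Sum>j\<in>UNIV - {i}. of_rat (m i j) * (Re (W i) - Re (W j))) = (0::real)" for i
    using arg_cong[OF z[of i], of Re] by (simp only: Re_sum Re_of_rat_mult minus_complex.sel zero_complex.sel(1))
  have zi: "(\<Sum>j\<in>UNIV - {i}. of_rat (m i j) * (Im (W i) - Im (W j))) = (0::real)" for i
    using arg_cong[OF z[of i], of Im] by (simp only: Im_sum Im_of_rat_mult minus_complex.sel zero_complex.sel(2))
  have "\<exists>i0. \<forall>j. Re (W j) = Re (W i0)"
    apply (rule laplace_real[where c="\<lambda>i j. of_rat (m i j)"])
     apply (erule mpos)
    apply (rule zr)
    done
  then obtain i1 where i1: "\<forall>j. Re (W j) = Re (W i1)" by blast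
  have "\<exists>i0. \<forall>j. Im (W j) = Im (W i0)"
    apply (rule laplace_real[where c="\<lambda>i j. of_rat (m i j)"])
     apply (erule mpos)
    apply (rule zi)
    done
  then obtain i2 where i2: "\<forall>j. Im (W j) = Im (W i2)" by blast
  define c where "c = Complex (Re (W i1)) (Im (W i2))"
  have Wc: "W j = c" for j
    by (rule complex_eqI) (metis c_def complex.sel(1) i1, metis c_def complex.sel(2) i2)
  have "(\<Sum>i\<in>UNIV. W i) = 0" using W by (simp add: Fc_def)
  moreover have "(\<Sum>i\<in>UNIV. W i) = of_nat (card (UNIV :: 'n set)) * c"
    unfolding Wc by simp
  moreover have "card (UNIV :: 'n set) \<noteq> 0" by simp
  ultimately have "c = 0" by simp
  then show ?thesis using Wc by auto
qed


lemma qmag_sym: "qmag d a i j = qmag d a j i"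
  unfolding qmag_def by (metis minus_diff_eq minus_divide_divide)

lemma mvec_Fbar:
  fixes a :: "'n::finite \<Rightarrow> complex fls"
  shows "mvec (magic d a) v \<in> Fbar"
proof -
  have col: "(\<Sum>i\<in>UNIV. magic d a i j) = 0" for j
  proof -
    have "(\<Sum>i\<in>UNIV. magic d a i j) = magic d a j j + (\<Sum>i\<in>UNIV - {j}. magic d a i j)"
      by (simp add: sum.remove)
    also have "\<dots> = (\<Sum>k\<in>UNIV - {j}. qmag d a j k) + (\<Sum>i\<in>UNIV - {j}. - qmag d a i j)"
      by (simp add: magic_def)
    also have "\<dots> = (\<Sum>k\<in>UNIV - {j}. qmag d a j k - qmag d a k j)"
      by (simp add: sum.distrib[symmetric])
    also have "\<dots> = 0" by (simp add: qmag_sym)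
    finally show ?thesis .
  qed
  have "(\<Sum>i\<in>UNIV. mvec (magic d a) v i) = (\<Sum>j\<in>UNIV. (\<Sum>i\<in>UNIV. magic d a i j) * v j)"
    unfolding mvec_def sum_distrib_right by (rule sum.swap)
  also have "\<dots> = 0" by (simp add: col)
  finally show ?thesis by (simp add: Fbar_def)
qed

lemma lower:
  fixes a :: "'n::finite \<Rightarrow> complex fls"
  assumes ia: "inj a" and d1: "d \<ge> 1" and pos: "\<forall>i. \<forall>k \<le> 0. fls_nth (a i) k = 0"
    and vF: "v \<in> Fbar" and hw: "\<forall>i k. k < K \<longrightarrow> fls_nth (mvec (magic d a) v i) k = 0"
  shows "\<forall>j l. l < K + int d \<longrightarrow> fls_nth (v j) l = 0"
proof (rule ccontr)
  assume "\<not> ?thesis"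
  then obtain j1 l1 where l1: "l1 < K + int d" "fls_nth (v j1) l1 \<noteq> 0" by blast
  define S where "S = {j. v j \<noteq> 0}"
  define T where "T = (\<lambda>j. fls_subdegree (v j)) ` S"
  define s where "s = Min T"
  have j1S: "j1 \<in> S" using l1 by (auto simp: S_def)
  have fT: "finite T" "T \<noteq> {}" using j1S by (auto simp: T_def)
  have low: "\<forall>j l. l < s \<longrightarrow> fls_nth (v j) l = 0"
  proof (intro allI impI)
    fix j l assume "l < s"
    show "fls_nth (v j) l = 0"
    proof (cases "v j = 0")
      case False
      then have "s \<le> fls_subdegree (v j)" unfolding s_def
        using fT by (intro Min_le) (auto simp: T_def S_def)
      then show ?thesis using \<open>l < s\<close> by simp
    qed simp
  qed
  have "s \<in> T" unfolding s_def using fT by (rule Min_in)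
  then obtain j0 where j0: "v j0 \<noteq> 0" "fls_subdegree (v j0) = s" by (auto simp: T_def S_def)
  have nz: "fls_nth (v j0) s \<noteq> 0" using j0 by (metis nth_fls_subdegree_nonzero)
  have "s \<le> fls_subdegree (v j1)" unfolding s_def using fT j1S by (intro Min_le) (auto simp: T_def)
  also have "fls_subdegree (v j1) \<le> l1" using l1(2) by (rule fls_subdegree_leI)
  finally have sK: "s - int d < K" using l1(1) by simp
  define V where "V = (\<lambda>j. fls_nth (v j) s)"
  have AV: "mvec (\<lambda>i j. of_rat (valmat d a i j)) V = (\<lambda>_. 0)"
  proof
    fix i
    show "mvec (\<lambda>i j. of_rat (valmat d a i j)) V i = 0"
      using key[OF ia d1 low, of i] hw sK unfolding V_def by metis
  qed
  have "(\<Sum>j\<in>UNIV. V j) = fls_nth (\<Sum>j\<in>UNIV. v j) s" unfolding V_def fls_nth_sum ..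
  also have "\<dots> = 0" using vF by (simp add: Fbar_def)
  finally have VF: "V \<in> Fc" by (simp add: Fc_def)
  have "V = (\<lambda>_. 0)" by (rule laplace_inj[OF ia d1 pos VF AV])
  then show False using nz unfolding V_def by (metis)
qed

lemma kernel:
  fixes a :: "'n::finite \<Rightarrow> complex fls"
  assumes ia: "inj a" and d1: "d \<ge> 1" and pos: "\<forall>i. \<forall>k \<le> 0. fls_nth (a i) k = 0"
    and vF: "v \<in> Fbar" and z: "\<And>i. mvec (magic d a) v i = 0"
  shows "v j = 0"
proof (rule fls_eqI)
  fix l
  have "\<forall>j l'. l' < (l - int d + 1) + int d \<longrightarrow> fls_nth (v j) l' = 0"
    by (rule lower[OF ia d1 pos vF]) (simp add: z)
  then show "fls_nth (v j) l = fls_nth 0 l" by simp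
qed

lemma mvec_diff: "mvec (M :: 'n::finite \<Rightarrow> 'n \<Rightarrow> complex fls) (\<lambda>j. v j - u j) i = mvec M v i - mvec M u i"
  unfolding mvec_def by (simp add: right_diff_distrib sum_subtractf)

lemma inj_M:
  fixes a :: "'n::finite \<Rightarrow> complex fls"
  assumes ia: "inj a" and d1: "d \<ge> 1" and pos: "\<forall>i. \<forall>k \<le> 0. fls_nth (a i) k = 0"
  shows "inj_on (mvec (magic d a)) Fbar"
proof (rule inj_onI)
  fix v u assume v: "v \<in> Fbar" and u: "u \<in> Fbar" and eq: "mvec (magic d a) v = mvec (magic d a) u"
  have wF: "(\<lambda>j. v j - u j) \<in> Fbar" using v u by (simp add: Fbar_def sum_subtractf)
  have "v j - u j = 0" for j
    by (rule kernel[OF ia d1 pos wF]) (simp add: mvec_diff eq)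
  then show "v = u" by auto
qed

lemma surj_M:
  fixes a :: "'n::finite \<Rightarrow> complex fls"
  assumes ia: "inj a" and d1: "d \<ge> 1" and pos: "\<forall>i. \<forall>k \<le> 0. fls_nth (a i) k = 0"
    and wF: "w \<in> Fbar"
  shows "\<exists>v\<in>Fbar. mvec (magic d a) v = w"
proof -
  obtain i0 :: 'n where True by blast
  define Em :: "complex fls^'n^'n" where
    "Em = (\<chi> i j. magic d a i j + (if i = i0 then 1 else 0))"
  have Ev: "(Em *v u) $ i = mvec (magic d a) (vec_nth u) i + (if i = i0 then (\<Sum>j\<in>UNIV. u $ j) else 0)" for u i
    unfolding Em_def matrix_vector_mult_def mvec_def
    by (simp add: distrib_right sum.distrib)
  have sumE: "(\<Sum>i\<in>UNIV. (Em *v u) $ i) = (\<Sum>j\<in>UNIV. u $ j)" for u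
  proof -
    have "(\<Sum>i\<in>UNIV. (Em *v u) $ i) = (\<Sum>i\<in>UNIV. mvec (magic d a) (vec_nth u) i)
          + (\<Sum>i\<in>UNIV. (if i = i0 then (\<Sum>j\<in>UNIV. u $ j) else 0))"
      unfolding Ev by (rule sum.distrib)
    also have "\<dots> = (\<Sum>j\<in>UNIV. u $ j)"
      using mvec_Fbar[of d a "vec_nth u"] by (simp add: Fbar_def)
    finally show ?thesis .
  qed
  have inj0: "u = 0" if "Em *v u = 0" for u
  proof -
    have s0: "(\<Sum>j\<in>UNIV. u $ j) = 0" using sumE[of u] that by simp
    then have uF: "vec_nth u \<in> Fbar" by (simp add: Fbar_def)
    have "mvec (magic d a) (vec_nth u) i = 0" for i
      using Ev[of u i] arg_cong[OF that, of "\<lambda>x. x $ i"] s0 by (cases "i = i0") simp_all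
    then have "u $ j = 0" for j by (rule kernel[OF ia d1 pos uF])
    then show ?thesis by (simp add: vec_eq_iff)
  qed
  have "inj ((*v) Em)"
  proof (rule injI)
    fix x y assume "Em *v x = Em *v y"
    then have "Em *v (x - y) = 0" by (simp add: matrix_vector_mult_diff_distrib)
    then show "x = y" using inj0 by (metis eq_iff_diff_eq_0)
  qed
  then have "surj ((*v) Em)" by (rule vec.linear_inj_imp_surj[OF matrix_vector_mul_linear_gen])
  then obtain u where u: "Em *v u = vec_lambda w" by (metis surjD)
  have "(\<Sum>j\<in>UNIV. u $ j) = (\<Sum>i\<in>UNIV. w i)" using sumE[of u] u by simp
  also have "\<dots> = 0" using wF by (simp add: Fbar_def)
  finally have s0: "(\<Sum>j\<in>UNIV. u $ j) = 0" .
  have "mvec (magic d a) (vec_nth u) i = w i" for i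
    using Ev[of u i] u s0 by simp
  moreover have "vec_nth u \<in> Fbar" using s0 by (simp add: Fbar_def)
  ultimately show ?thesis by blast
qed


lemma mvecc_diff: "mvec (M :: 'n::finite \<Rightarrow> 'n \<Rightarrow> complex) (\<lambda>j. v j - u j) i = mvec M v i - mvec M u i"
  unfolding mvec_def by (simp add: right_diff_distrib sum_subtractf)

lemma inj_A:
  fixes a :: "'n::finite \<Rightarrow> complex fls"
  assumes ia: "inj a" and d1: "d \<ge> 1" and pos: "\<forall>i. \<forall>k \<le> 0. fls_nth (a i) k = 0"
  shows "inj_on (mvec (\<lambda>i j. of_rat (valmat d a i j))) Fc"
proof (rule inj_onI)
  fix v u assume v: "v \<in> Fc" and u: "u \<in> Fc"
    and eq: "mvec (\<lambda>i j. of_rat (valmat d a i j)) v = mvec (\<lambda>i j. of_rat (valmat d a i j)) u"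
  have wF: "(\<lambda>j. v j - u j) \<in> Fc" using v u by (simp add: Fc_def sum_subtractf)
  have "(\<lambda>j. v j - u j) = (\<lambda>_. 0)"
    by (rule laplace_inj[OF ia d1 pos wF]) (simp add: mvecc_diff eq fun_eq_iff)
  then show "v = u" by (auto simp: fun_eq_iff)
qed

theorem mainTheorem10:
  fixes d :: nat and a :: "'n::finite \<Rightarrow> complex fls"
  assumes "d \<ge> 1" and "card (UNIV :: 'n set) \<ge> 2" and "inj a"
    and "\<forall>i. \<forall>k \<le> 0. fls_nth (a i) k = 0"
  shows "bij_betw (mvec (magic d a)) Fbar Fbar \<and>
    (\<forall>r w. w \<in> Fbar \<and> val_ge d r w \<longrightarrow>
       val_ge d (r + 1) (the_inv_into Fbar (mvec (magic d a)) w) \<and>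
       initial d (r + 1) (the_inv_into Fbar (mvec (magic d a)) w) =
         the_inv_into Fc (mvec (\<lambda>i j. of_rat (valmat d a i j))) (initial d r w))"
proof -
  note ia = assms(3) and d1 = assms(1) and pos = assms(4)
  let ?M = "mvec (magic d a)"
  let ?A = "mvec (\<lambda>i j. of_rat (valmat d a i j)) :: ('n \<Rightarrow> complex) \<Rightarrow> 'n \<Rightarrow> complex"
  have injM: "inj_on ?M Fbar" by (rule inj_M[OF ia d1 pos])
  have img: "?M ` Fbar = Fbar"
    using mvec_Fbar[of d a] surj_M[OF ia d1 pos] by blast
  have bij: "bij_betw ?M Fbar Fbar" using injM img by (simp add: bij_betw_def)
  have injA: "inj_on ?A Fc" by (rule inj_A[OF ia d1 pos])
  have dpos: "(0::rat) < of_nat d" using d1 by simp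
  have rest: "val_ge d (r + 1) (the_inv_into Fbar ?M w) \<and>
       initial d (r + 1) (the_inv_into Fbar ?M w) = the_inv_into Fc ?A (initial d r w)"
    if wF: "w \<in> Fbar" and vw: "val_ge d r w" for r w
  proof -
    obtain v where vF: "v \<in> Fbar" and Mv: "?M v = w" using surj_M[OF ia d1 pos wF] by blast
    have inv: "the_inv_into Fbar ?M w = v" using the_inv_into_f_f[OF injM vF] Mv by simp
    define K where "K = \<lceil>r * of_nat d\<rceil>"
    have hw: "\<forall>i k. k < K \<longrightarrow> fls_nth (?M v i) k = 0"
    proof (intro allI impI)
      fix i k assume "k < K"
      then have "of_int k < r * of_nat d" unfolding K_def by (simp add: less_ceiling_iff)
      then have "of_int k / of_nat d < r" using dpos by (simp add: pos_divide_less_eq)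
      then show "fls_nth (?M v i) k = 0" using vw Mv unfolding val_ge_def by blast
    qed
    have low: "\<forall>j l. l < K + int d \<longrightarrow> fls_nth (v j) l = 0"
      by (rule lower[OF ia d1 pos vF hw])
    have vg: "val_ge d (r + 1) v" unfolding val_ge_def
    proof (intro allI impI)
      fix i k assume "of_int k / of_nat d < r + 1"
      then have "of_int k < (r + 1) * of_nat d" using dpos by (simp add: pos_divide_less_eq)
      then have "of_int (k - int d) < r * of_nat d" by (simp add: algebra_simps)
      then have "k - int d < K" unfolding K_def by (simp add: less_ceiling_iff)
      then show "fls_nth (v i) k = 0" using low by auto
    qed
    have ini: "initial d (r + 1) v = the_inv_into Fc ?A (initial d r w)"
    proof (cases "r * of_nat d \<in> \<int>")
      case True
      then obtain k0 where k0: "r * of_nat d = of_int k0" by (auto elim: Ints_cases)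
      have KK: "K = k0" unfolding K_def k0 by simp
      have r1: "(r + 1) * of_nat d = of_int (k0 + int d)" using k0 by (simp add: algebra_simps)
      define V where "V = (\<lambda>j. fls_nth (v j) (K + int d))"
      have low2: "\<forall>j l. l < K + int d \<longrightarrow> fls_nth (v j) l = 0" by (rule low)
      have kv: "fls_nth (?M v i) (K + int d - int d) = ?A V i" for i
        using key[OF ia d1 low2, of i] unfolding V_def by blast
      have iw: "initial d r w = ?A V"
      proof
        fix i show "initial d r w i = ?A V i"
          using kv[of i] Mv True unfolding initial_def k0 KK by simp
      qed
      have VF: "V \<in> Fc"
      proof -
        have "(\<Sum>j\<in>UNIV. V j) = fls_nth (\<Sum>j\<in>UNIV. v j) (K + int d)" unfolding V_def fls_nth_sum ..
        also have "\<dots> = 0" using vF by (simp add: Fbar_def)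
        finally show ?thesis by (simp add: Fc_def)
      qed
      have "initial d (r + 1) v = V"
        unfolding initial_def r1 V_def KK by simp
      then show ?thesis unfolding iw using the_inv_into_f_f[OF injA VF] by simp
    next
      case False
      have F2: "(r + 1) * of_nat d \<notin> \<int>"
      proof
        assume "(r + 1) * of_nat d \<in> \<int>"
        then have "(r + 1) * of_nat d - of_nat d \<in> \<int>" by (intro Ints_diff) auto
        then show False using False by (simp add: algebra_simps)
      qed
      have z1: "initial d (r + 1) v = (\<lambda>_. 0)" unfolding initial_def using F2 by simp
      have z2: "initial d r w = (\<lambda>_. 0)" unfolding initial_def using False by simp
      have A0: "?A (\<lambda>_. 0) = (\<lambda>_. 0)" by (simp add: mvec_def)
      have F0: "(\<lambda>_. 0) \<in> (Fc :: ('n \<Rightarrow> complex) set)" by (simp add: Fc_def)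
      show ?thesis unfolding z1 z2 using the_inv_into_f_f[OF injA F0] A0 by simp
    qed
    show ?thesis unfolding inv using vg ini by simp
  qed
  show ?thesis using bij rest by blast
qed

end
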